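(* Consider a $\mathrm{Knapsack}$ instance $(C,V)$ with LP relaxation $K$ and optimal integral value $\mathrm{OPT}$, and let $t\ge 2$ be an integer. Then $$\max\Big\{\sum_{i\in V}v_i\,y_{\{i\}}: y\in\mathrm{La}^t(K)\Big\}\le\Big(1+\frac{1}{t-1}\Big)\mathrm{OPT}.$$ In particular, the integrality gap of the $t$-th level of the Lasserre hierarchy for $\mathrm{Knapsack}$ is at most $t/(t-1)$.
   Context: A $\mathrm{Knapsack}$ instance consists of objects $V=[n]$ with sizes $c_i\ge 0$, values $v_i\ge 0$ and a capacity $C$ with $c_i\le C$ for all $i$; $\mathrm{OPT}$ is the maximum of $\sum_{i\in X}v_i$ over $X\subseteq V$ with $\sum_{i\in X}c_i\le C$. Its LP relaxation is $K=\{x\in[0,1]^n: g(x)\ge 0\}$ with the single constraint $g(x)=C-\sum_{i\in V}c_ix_i$. Notation: $\mathcal P_t(U)$ is the set of subsets of $U$ of size at most $t$. For a collection $\mathcal T$ of subsets and a vector $y$ indexed by subsets, $M_{\mathcal T}(y)$ is the symmetric matrix indexed by $\mathcal T$ with $(I,J)$-entry $y_{I\cup J}$. For an affine $g(x)=b+\sum_{j}a_jx_j$, $(g*y)_I=b\,y_I+\sum_j a_j y_{I\cup\{j\}}$. The $t$-th Lasserre lifted polytope $\mathrm{La}^t(K)$ is the set of $y\in[0,1]^{\mathcal P_{2t}(V)}$ with $y_\emptyset=1$, $M_{\mathcal P_t(V)}(y)\succeq0$, and $M_{\mathcal P_{t-1}(V)}(g*y)\succeq0$. *)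

theory Defs
  imports "HOL-Analysis.Analysis"
begin

definition Pt :: "nat \<Rightarrow> 'a set \<Rightarrow> 'a set set" where
  "Pt t U = {I. I \<subseteq> U \<and> card I \<le> t}"

text \<open>Positive semidefiniteness of the real symmetric matrix indexed by the finite
  collection T with (I,J)-entry w (I \<union> J), i.e. the moment matrix M_T(w).\<close>
definition moment_psd :: "'a set set \<Rightarrow> ('a set \<Rightarrow> real) \<Rightarrow> bool" where
  "moment_psd T w \<longleftrightarrow>
     (\<forall>z :: 'a set \<Rightarrow> real. (\<Sum>I\<in>T. \<Sum>J\<in>T. z I * w (I \<union> J) * z J) \<ge> 0)"

text \<open>(g * y)_I for g(x) = C - sum_i c_i x_i.\<close>
definition knap_shift :: "'a set \<Rightarrow> ('a \<Rightarrow> real) \<Rightarrow> real \<Rightarrow> ('a set \<Rightarrow> real) \<Rightarrow> 'a set \<Rightarrow> real" where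
  "knap_shift V c C y I = C * y I - (\<Sum>j\<in>V. c j * y (I \<union> {j}))"

text \<open>The t-th Lasserre lifted polytope La^t(K) of the knapsack LP relaxation K
  (only the values of y on P_{2t}(V) matter).\<close>
definition lasserre_knapsack :: "nat \<Rightarrow> 'a set \<Rightarrow> ('a \<Rightarrow> real) \<Rightarrow> real \<Rightarrow> ('a set \<Rightarrow> real) set" where
  "lasserre_knapsack t V c C =
     {y. (\<forall>I\<in>Pt (2*t) V. 0 \<le> y I \<and> y I \<le> 1) \<and> y {} = 1 \<and>
         moment_psd (Pt t V) y \<and>
         moment_psd (Pt (t - 1) V) (knap_shift V c C y)}"

definition knapsack_OPT :: "'a set \<Rightarrow> ('a \<Rightarrow> real) \<Rightarrow> ('a \<Rightarrow> real) \<Rightarrow> real \<Rightarrow> real" where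
  "knapsack_OPT V c v C = Max {(\<Sum>i\<in>X. v i) | X. X \<subseteq> V \<and> (\<Sum>i\<in>X. c i) \<le> C}"

end

theory Submission
  imports Defs
begin

definition Zs :: "'a set \<Rightarrow> nat \<Rightarrow> 'a set \<Rightarrow> 'a set set" where
  "Zs L N S = {J. J \<subseteq> L \<and> card J \<le> N \<and> S \<subseteq> J}"

definition Mob :: "'a set \<Rightarrow> nat \<Rightarrow> 'a set \<Rightarrow> ('a set \<Rightarrow> real) \<Rightarrow> real" where
  "Mob L N S f = (\<Sum>K\<in>Zs L N S. (-1::real)^card (K - S) * f K)"

definition zvec :: "'a set \<Rightarrow> nat \<Rightarrow> 'a set \<Rightarrow> 'a set \<Rightarrow> real" where
  "zvec L N S I = (if I \<in> Zs L N S then (-1::real)^card (I - S) else 0)"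

lemma finite_Zs: "finite L \<Longrightarrow> finite (Zs L N S)"
  unfolding Zs_def by (rule finite_subset[of _ "Pow L"]) auto

lemma restrict_qf:
  assumes "finite T" "A \<subseteq> T" "\<And>I. I \<notin> A \<Longrightarrow> z I = 0"
  shows "(\<Sum>I\<in>T. \<Sum>J\<in>T. z I * w (I \<union> J) * z J) = (\<Sum>I\<in>A. \<Sum>J\<in>A. z I * w (I \<union> J) * (z J::real))"
proof -
  have "(\<Sum>I\<in>T. \<Sum>J\<in>T. z I * w (I \<union> J) * z J) = (\<Sum>I\<in>A. \<Sum>J\<in>T. z I * w (I \<union> J) * z J)"
    by (rule sum.mono_neutral_right) (use assms in auto)
  also have "\<dots> = (\<Sum>I\<in>A. \<Sum>J\<in>A. z I * w (I \<union> J) * (z J::real))"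
    by (intro sum.cong refl sum.mono_neutral_right) (use assms in auto)
  finally show ?thesis .
qed

lemma invol_sum_zero:
  assumes "finite A" "\<And>a. a \<in> A \<Longrightarrow> s a \<in> A" "\<And>a. a \<in> A \<Longrightarrow> s (s a) = a"
    "\<And>a. a \<in> A \<Longrightarrow> g (s a) = - g a"
  shows "sum g A = (0::real)"
proof -
  have "sum g A = sum (\<lambda>a. - g a) A"
    by (rule sum.reindex_bij_witness[of A s s]) (use assms in auto)
  then show ?thesis by (simp add: sum_negf)
qed

lemma flip_props:
  fixes J S :: "'a set" and x :: 'a
  assumes "finite J" "x \<notin> S"
  defines "s \<equiv> (if x \<in> J then J - {x} else insert x J)"
  shows "(-1::real)^card (s - S) = - ((-1::real)^card (J - S))" "s - {x} = J - {x}" "insert x s = insert x J"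
    "(if x \<in> s then s - {x} else insert x s) = J"
proof -
  show "(-1::real)^card (s - S) = - ((-1::real)^card (J - S))"
  proof (cases "x \<in> J")
    case True
    have "s - S = (J - S) - {x}" using True by (auto simp: s_def)
    moreover have "x \<in> J - S" using True assms by auto
    moreover have "finite (J - S)" using assms by auto
    ultimately have "card (J - S) = Suc (card (s - S))"
      by (metis card_Suc_Diff1)
    then show ?thesis by simp
  next
    case False
    have "s - S = insert x (J - S)" using False assms by (auto simp: s_def)
    then show ?thesis using False assms by simp
  qed
qed (auto simp: s_def)

lemma inv_zero:
  assumes "finite L" "S \<subseteq> I" "I \<subseteq> L" "x \<in> I" "x \<notin> S"
    and van: "\<And>K. K \<subseteq> L \<Longrightarrow> N < card K \<Longrightarrow> card K \<le> card I + N \<Longrightarrow> f K = 0"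
  shows "(\<Sum>J\<in>Zs L N S. (-1::real)^card (J - S) * f (I \<union> J)) = 0"
proof -
  let ?g = "\<lambda>J. (-1::real)^card (J - S) * f (I \<union> J)"
  let ?A = "{J \<in> Zs L N S. card (I \<union> J) \<le> N}"
  let ?s = "\<lambda>J. if x \<in> J then J - {x} else insert x J"
  have finI: "finite I" using assms finite_subset by blast
  have "(\<Sum>J\<in>Zs L N S. ?g J) = (\<Sum>J\<in>?A. ?g J)"
  proof (rule sum.mono_neutral_right)
    show "finite (Zs L N S)" using finite_Zs assms by blast
    show "\<forall>J\<in>Zs L N S - ?A. ?g J = 0"
    proof
      fix J assume J: "J \<in> Zs L N S - ?A"
      then have "J \<subseteq> L" "card J \<le> N" "N < card (I \<union> J)" by (auto simp: Zs_def)
      moreover have "card (I \<union> J) \<le> card I + card J" by (rule card_Un_le)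
      ultimately have "f (I \<union> J) = 0" using van[of "I \<union> J"] assms by auto
      then show "?g J = 0" by simp
    qed
  qed auto
  also have "\<dots> = 0"
  proof (rule invol_sum_zero[where s = ?s])
    show "finite ?A" using finite_Zs[OF assms(1)] by auto
  next
    fix J assume J: "J \<in> ?A"
    then have fJ: "finite J" using assms finite_subset unfolding Zs_def by blast
    have IU: "I \<union> ?s J = I \<union> J" using assms by auto
    have cs: "card (?s J) \<le> card (I \<union> ?s J)" 
      by (rule card_mono) (use finI fJ in auto)
    show "?s J \<in> ?A" using J assms IU cs by (auto simp: Zs_def)
    show "?s (?s J) = J" using flip_props(4)[OF fJ assms(5)] by simp
    show "?g (?s J) = - ?g J" using flip_props(1)[OF fJ assms(5)] IU by simp
  qed
  finally show ?thesis .
qed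

lemma qf_mob:
  assumes "finite L" "S \<subseteq> L" "card S \<le> N"
    and van: "\<And>K. K \<subseteq> L \<Longrightarrow> N < card K \<Longrightarrow> card K \<le> 2*N+1 \<Longrightarrow> f K = 0"
  shows "(\<Sum>I\<in>Zs L N {}. \<Sum>J\<in>Zs L N {}. zvec L N S I * f (I \<union> J) * zvec L N S J) = Mob L N S f"
proof -
  let ?Z = "Zs L N S"
  have fZ: "finite ?Z" using finite_Zs assms by blast
  have SZ: "S \<in> ?Z" using assms by (auto simp: Zs_def)
  have "(\<Sum>I\<in>Zs L N {}. \<Sum>J\<in>Zs L N {}. zvec L N S I * f (I \<union> J) * zvec L N S J)
     = (\<Sum>I\<in>?Z. \<Sum>J\<in>?Z. zvec L N S I * f (I \<union> J) * zvec L N S J)"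
    by (rule restrict_qf) (use finite_Zs assms in \<open>auto simp: Zs_def zvec_def\<close>)
  also have "\<dots> = (\<Sum>I\<in>?Z. zvec L N S I * (\<Sum>J\<in>?Z. (-1::real)^card (J - S) * f (I \<union> J)))"
    by (simp add: sum_distrib_left zvec_def mult_ac)
  also have "\<dots> = zvec L N S S * (\<Sum>J\<in>?Z. (-1::real)^card (J - S) * f (S \<union> J))
       + (\<Sum>I\<in>?Z - {S}. zvec L N S I * (\<Sum>J\<in>?Z. (-1::real)^card (J - S) * f (I \<union> J)))"
    by (rule sum.remove[OF fZ SZ])
  also have "(\<Sum>I\<in>?Z - {S}. zvec L N S I * (\<Sum>J\<in>?Z. (-1::real)^card (J - S) * f (I \<union> J))) = 0"
  proof (rule sum.neutral, rule ballI)
    fix I assume I: "I \<in> ?Z - {S}"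
    then obtain x where x: "x \<in> I" "x \<notin> S" by (auto simp: Zs_def)
    have "(\<Sum>J\<in>?Z. (-1::real)^card (J - S) * f (I \<union> J)) = 0"
      by (rule inv_zero[OF assms(1) _ _ x]) (use I van in \<open>auto simp: Zs_def\<close>)
    then show "zvec L N S I * (\<Sum>J\<in>?Z. (-1::real)^card (J - S) * f (I \<union> J)) = 0" by simp
  qed
  also have "(\<Sum>J\<in>?Z. (-1::real)^card (J - S) * f (S \<union> J)) = Mob L N S f"
    unfolding Mob_def by (rule sum.cong) (auto simp: Zs_def Un_absorb1)
  finally show ?thesis using SZ by (simp add: zvec_def)
qed

lemma alt_pow_sum:
  assumes "finite K"
  shows "(\<Sum>S\<in>Pow K. (-1::real)^card (K - S)) = (if K = {} then 1 else 0)"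
proof (cases "K = {}")
  case False
  then obtain x where x: "x \<in> K" by auto
  let ?s = "\<lambda>S. if x \<in> S then S - {x} else insert x S"
  have "(\<Sum>S\<in>Pow K. (-1::real)^card (K - S)) = 0"
  proof (rule invol_sum_zero[where s = ?s])
    fix S assume S: "S \<in> Pow K"
    show "?s S \<in> Pow K" using S x by auto
    show "?s (?s S) = S" by auto
    have fin: "finite (K - S)" using assms by auto
    show "(-1::real)^card (K - ?s S) = - ((-1)^card (K - S))"
    proof (cases "x \<in> S")
      case True
      have "K - ?s S = insert x (K - S)" using True x by auto
      then show ?thesis using True fin by simp
    next
      case False
      have "K - S = insert x (K - ?s S)" using False x by auto
      moreover have "x \<notin> K - ?s S" using False by auto
      ultimately have "card (K - S) = Suc (card (K - ?s S))" using fin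
        by (metis card_insert_disjoint finite_Diff2 finite_insert)
      then show ?thesis by simp
    qed
  qed (use assms in auto)
  then show ?thesis using False by simp
qed simp

lemma mob_sum:
  assumes "finite L"
  shows "(\<Sum>S\<in>Zs L N {}. Mob L N S f) = f {}"
proof -
  have fZ: "finite (Zs L N {})" using finite_Zs assms by blast
  have "(\<Sum>S\<in>Zs L N {}. Mob L N S f)
      = (\<Sum>S\<in>Zs L N {}. \<Sum>K\<in>{K. K \<in> Zs L N {} \<and> S \<subseteq> K}. (-1::real)^card (K - S) * f K)"
    unfolding Mob_def by (intro sum.cong refl) (auto simp: Zs_def)
  also have "\<dots> = (\<Sum>K\<in>Zs L N {}. \<Sum>S\<in>{S. S \<in> Zs L N {} \<and> S \<subseteq> K}. (-1::real)^card (K - S) * f K)"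
    by (rule sum.swap_restrict[OF fZ fZ])
  also have "\<dots> = (\<Sum>K\<in>Zs L N {}. f K * (\<Sum>S\<in>Pow K. (-1::real)^card (K - S)))"
  proof (intro sum.cong refl)
    fix K assume K: "K \<in> Zs L N {}"
    have "{S. S \<in> Zs L N {} \<and> S \<subseteq> K} = Pow K"
      using K assms by (auto simp: Zs_def) (meson card_mono finite_subset le_trans)
    then show "(\<Sum>S\<in>{S. S \<in> Zs L N {} \<and> S \<subseteq> K}. (-1::real)^card (K - S) * f K)
          = f K * (\<Sum>S\<in>Pow K. (-1::real)^card (K - S))"
      by (simp add: sum_distrib_left mult_ac)
  qed
  also have "\<dots> = (\<Sum>K\<in>Zs L N {}. if K = {} then f K else 0)"
  proof (intro sum.cong refl)
    fix K assume "K \<in> Zs L N {}"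
    then have "finite K" using assms finite_subset by (auto simp: Zs_def)
    then show "f K * (\<Sum>S\<in>Pow K. (-1::real)^card (K - S)) = (if K = {} then f K else 0)"
      by (simp add: alt_pow_sum)
  qed
  also have "\<dots> = f {}"
    by (subst sum.delta) (use fZ in \<open>auto simp: Zs_def\<close>)
  finally show ?thesis .
qed

locale lk =
  fixes V :: "'a set" and c v :: "'a \<Rightarrow> real" and C :: real and t :: nat
    and y :: "'a set \<Rightarrow> real"
  assumes fin: "finite V"
    and c0: "\<And>i. i \<in> V \<Longrightarrow> 0 \<le> c i"
    and v0: "\<And>i. i \<in> V \<Longrightarrow> 0 \<le> v i"
    and t2: "t \<ge> 2"
    and yL: "y \<in> lasserre_knapsack t V c C"

context lk
begin

lemma yb: "I \<subseteq> V \<Longrightarrow> card I \<le> 2*t \<Longrightarrow> 0 \<le> y I \<and> y I \<le> 1"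
  using yL by (auto simp: lasserre_knapsack_def Pt_def)

lemma y0: "y {} = 1" using yL by (auto simp: lasserre_knapsack_def)
lemma psd1: "moment_psd (Pt t V) y" using yL by (auto simp: lasserre_knapsack_def)
lemma psd2: "moment_psd (Pt (t-1) V) (knap_shift V c C y)" using yL by (auto simp: lasserre_knapsack_def)

lemma finPt: "finite (Pt k V)"
  unfolding Pt_def by (rule finite_subset[of _ "Pow V"]) (use fin in auto)

lemma diag_ks:
  assumes "I \<in> Pt (t-1) V"
  shows "0 \<le> knap_shift V c C y I"
proof -
  let ?z = "\<lambda>K. if K = I then 1 else (0::real)"
  have "0 \<le> (\<Sum>I'\<in>Pt (t-1) V. \<Sum>J\<in>Pt (t-1) V. ?z I' * knap_shift V c C y (I' \<union> J) * ?z J)"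
    by (rule psd2[unfolded moment_psd_def, rule_format])
  also have "\<dots> = (\<Sum>I'\<in>{I}. \<Sum>J\<in>{I}. ?z I' * knap_shift V c C y (I' \<union> J) * ?z J)"
    by (rule restrict_qf) (use finPt assms in auto)
  finally show ?thesis by simp
qed

lemma zero_un:
  assumes I: "I \<in> Pt t V" and J: "J \<in> Pt t V" and yI: "y I = 0"
  shows "y (I \<union> J) = 0"
proof (cases "I = J")
  case True then show ?thesis using yI by simp
next
  case False
  have key: "0 \<le> y J + 2 * s * y (I \<union> J)" for s
  proof -
    let ?z = "\<lambda>K. if K = J then 1 else if K = I then s else (0::real)"
    have "0 \<le> (\<Sum>I'\<in>Pt t V. \<Sum>J'\<in>Pt t V. ?z I' * y (I' \<union> J') * ?z J')"
      by (rule psd1[unfolded moment_psd_def, rule_format])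
    also have "\<dots> = (\<Sum>I'\<in>{I,J}. \<Sum>J'\<in>{I,J}. ?z I' * y (I' \<union> J') * ?z J')"
      by (rule restrict_qf) (use finPt I J in auto)
    also have "\<dots> = s * s * y I + 2 * s * y (I \<union> J) + y J"
      using False by (simp add: Un_commute algebra_simps)
    finally show ?thesis using yI by simp
  qed
  show ?thesis
  proof (rule ccontr)
    assume ne: "y (I \<union> J) \<noteq> 0"
    have "0 \<le> y J + 2 * (- (y J + 1) / (2 * y (I \<union> J))) * y (I \<union> J)" by (rule key)
    also have "\<dots> = -1" using ne by (simp add: field_simps)
    finally show False by simp
  qed
qed

lemma C_nonneg: "0 \<le> C"
proof -
  have "{} \<in> Pt (t-1) V" by (simp add: Pt_def)
  then have "0 \<le> knap_shift V c C y {}" by (rule diag_ks)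
  then have "(\<Sum>j\<in>V. c j * y {j}) \<le> C" by (simp add: knap_shift_def y0)
  moreover have "0 \<le> (\<Sum>j\<in>V. c j * y {j})"
    by (rule sum_nonneg) (use c0 yb t2 in auto)
  ultimately show ?thesis by linarith
qed

lemma small_infeas:
  assumes "I \<subseteq> V" "card I \<le> t - 1" "(\<Sum>i\<in>I. c i) > C"
  shows "y I = 0"
proof -
  have IP: "I \<in> Pt (t-1) V" using assms by (simp add: Pt_def)
  have finI: "finite I" using assms fin finite_subset by blast
  have d: "0 \<le> knap_shift V c C y I" using diag_ks IP by blast
  have e1: "knap_shift V c C y I = C * y I - (\<Sum>j\<in>V - I. c j * y (I \<union> {j})) - (\<Sum>j\<in>I. c j * y (I \<union> {j}))"
    unfolding knap_shift_def using sum.subset_diff[OF assms(1) fin, of "\<lambda>j. c j * y (I \<union> {j})"] by simp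
  have e2: "(\<Sum>j\<in>I. c j * y (I \<union> {j})) = (\<Sum>j\<in>I. c j) * y I"
    by (simp add: sum_distrib_right insert_absorb)
  have e3: "0 \<le> (\<Sum>j\<in>V - I. c j * y (I \<union> {j}))"
  proof (rule sum_nonneg)
    fix j assume j: "j \<in> V - I"
    have "card (I \<union> {j}) \<le> 2 * t"
      using card_Un_le[of I "{j}"] assms(2) t2 by simp
    then show "0 \<le> c j * y (I \<union> {j})" using j c0 yb[of "I \<union> {j}"] assms(1) by auto
  qed
  have "0 \<le> (C - (\<Sum>j\<in>I. c j)) * y I" using d e1 e2 e3 by (simp add: algebra_simps)
  moreover have "0 \<le> y I" using yb[of I] assms t2 by auto
  ultimately show ?thesis using assms(3)
    by (smt (verit) mult_neg_pos)
qed

lemma van: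
  assumes K: "K \<subseteq> V" "card K \<le> 2*t" and I0: "I0 \<subseteq> K" "card I0 = t - 1" "y I0 = 0"
  shows "y K = 0"
proof -
  have finK: "finite K" using K fin finite_subset by blast
  have I0P: "I0 \<in> Pt t V" using I0 K by (auto simp: Pt_def)
  show ?thesis
  proof (cases "card K \<le> t")
    case True
    then have "K \<in> Pt t V" using K by (simp add: Pt_def)
    from zero_un[OF I0P this I0(3)] show ?thesis using I0 by (simp add: Un_absorb1)
  next
    case False
    have "card (K - I0) = card K - card I0" using finK I0 by (simp add: card_Diff_subset finite_subset)
    then have "1 \<le> card (K - I0)" using False I0 by simp
    then obtain A' where A': "A' \<subseteq> K - I0" "card A' = 1" using obtain_subset_with_card_n by metis
    let ?A = "I0 \<union> A'"
    have finA': "finite A'" using A' finK finite_subset by blast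
    have cA: "card ?A = t"
      using card_Un_disjoint[of I0 A'] A' I0 finA' finK finite_subset t2 by fastforce
    have AP: "?A \<in> Pt t V" using cA A' I0 K by (auto simp: Pt_def)
    have yA: "y ?A = 0" using zero_un[OF I0P AP I0(3)] by (simp add: Un_assoc)
    have AK: "?A \<subseteq> K" using A' I0 by auto
    have "card (K - ?A) = card K - t" using cA AK finK card_Diff_subset[of ?A K] finite_subset by metis
    then have BP: "K - ?A \<in> Pt t V" using K by (auto simp: Pt_def)
    have "y (?A \<union> (K - ?A)) = 0" by (rule zero_un[OF AP BP yA])
    moreover have "?A \<union> (K - ?A) = K" using AK by auto
    ultimately show ?thesis by simp
  qed
qed

end

context lk
begin

abbreviation "OPT \<equiv> knapsack_OPT V c v C"
definition "LL = {i \<in> V. OPT < v i * real (t - 1)}"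

lemma LL_iff: "i \<in> LL \<longleftrightarrow> i \<in> V \<and> OPT < v i * real (t - 1)"
  by (simp add: LL_def)

lemma LL_V: "LL \<subseteq> V" by (auto simp: LL_def)
abbreviation "NN \<equiv> t - 2"
abbreviation "Z0 \<equiv> Zs LL NN {}"
abbreviation "pp S \<equiv> Mob LL NN S y"
abbreviation "ww S i \<equiv> Mob LL NN S (\<lambda>K. y (insert i K))"

lemma opt_ge:
  assumes "X \<subseteq> V" "(\<Sum>i\<in>X. c i) \<le> C"
  shows "(\<Sum>i\<in>X. v i) \<le> OPT"
proof -
  have "finite {X. X \<subseteq> V \<and> (\<Sum>i\<in>X. c i) \<le> C}"
    by (rule finite_subset[of _ "Pow V"]) (use fin in auto)
  then have "finite {(\<Sum>i\<in>X. v i) | X. X \<subseteq> V \<and> (\<Sum>i\<in>X. c i) \<le> C}"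
    by (rule finite_image_set)
  then show ?thesis unfolding knapsack_OPT_def by (rule Max_ge) (use assms in blast)
qed

lemma opt_nonneg: "0 \<le> OPT"
  using opt_ge[of "{}"] C_nonneg by simp

lemma L_zero:
  assumes "I0 \<subseteq> LL" "card I0 = t - 1"
  shows "y I0 = 0"
proof (rule small_infeas)
  show "I0 \<subseteq> V" "card I0 \<le> t - 1" using assms LL_V by auto
  have IV: "I0 \<subseteq> V" using assms(1) LL_V by (rule order_trans)
  have finI: "finite I0" by (rule finite_subset[OF IV fin])
  have ne: "I0 \<noteq> {}" using assms t2 by auto
  have "(\<Sum>i\<in>I0. OPT) < (\<Sum>i\<in>I0. v i * real (t - 1))"
  proof (rule sum_strict_mono[OF finI ne])
    fix i assume "i \<in> I0"
    then have "i \<in> LL" using assms(1) by blast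
    then show "OPT < v i * real (t - 1)" by (simp add: LL_iff)
  qed
  also have "\<dots> = real (t-1) * (\<Sum>i\<in>I0. v i)"
    by (simp add: sum_distrib_right mult.commute)
  finally have "real (t-1) * OPT < real (t-1) * (\<Sum>i\<in>I0. v i)"
    using assms(2) t2 by simp
  then have lt: "OPT < (\<Sum>i\<in>I0. v i)"
    using mult_less_cancel_left_pos[of "real (t-1)"] t2 by force
  show "C < (\<Sum>i\<in>I0. c i)"
  proof (rule ccontr)
    assume "\<not> C < (\<Sum>i\<in>I0. c i)"
    then have "(\<Sum>i\<in>I0. v i) \<le> OPT" using opt_ge[OF IV] by simp
    then show False using lt by simp
  qed
qed

lemma vanL:
  assumes "K \<subseteq> V" "card K \<le> 2*t" "K' \<subseteq> K" "K' \<subseteq> LL" "t - 1 \<le> card K'"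
  shows "y K = 0"
proof -
  obtain I0 where I0: "I0 \<subseteq> K'" "card I0 = t - 1" "finite I0"
    by (rule obtain_subset_with_card_n[OF assms(5)])
  have "I0 \<subseteq> LL" using I0(1) assms(4) by (rule order_trans)
  then have "y I0 = 0" using I0(2) by (rule L_zero)
  moreover have "I0 \<subseteq> K" using I0(1) assms(3) by (rule order_trans)
  ultimately show ?thesis using van[OF assms(1,2) _ I0(2)] by blast
qed

lemma finLL: "finite LL" by (rule finite_subset[OF LL_V fin])

lemma van_yi:
  assumes "i \<in> V" "K \<subseteq> LL" "NN < card K" "card K \<le> 2*NN+1"
  shows "y (insert i K) = 0"
proof (rule vanL[of _ K])
  have "finite K" by (rule finite_subset[OF assms(2) finLL])
  then have "card (insert i K) \<le> card K + 1" by (simp add: card_insert_if)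
  then show "card (insert i K) \<le> 2*t" using assms(4) t2 by arith
qed (use assms t2 LL_V in auto)

lemma van_y:
  assumes "K \<subseteq> LL" "NN < card K" "card K \<le> 2*NN+1"
  shows "y K = 0"
  by (rule vanL[of _ K]) (use assms t2 LL_V in auto)

lemma van_ks:
  assumes "K \<subseteq> LL" "NN < card K" "card K \<le> 2*NN+1"
  shows "knap_shift V c C y K = 0"
  unfolding knap_shift_def using van_y[OF assms] van_yi[OF _ assms] by simp

lemma Z0_Pt: "Z0 \<subseteq> Pt t V" "Z0 \<subseteq> Pt (t-1) V"
  using LL_V by (auto simp: Zs_def Pt_def)

lemma zvec_supp: "I \<notin> Z0 \<Longrightarrow> zvec LL NN S I = 0"
  by (auto simp: zvec_def Zs_def)

lemma Q_y:
  assumes "S \<in> Z0"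
  shows "(\<Sum>I\<in>Z0. \<Sum>J\<in>Z0. zvec LL NN S I * y (I \<union> J) * zvec LL NN S J) = pp S"
  by (rule qf_mob[OF finLL]) (use assms van_y in \<open>auto simp: Zs_def\<close>)

lemma Q_yi:
  assumes "S \<in> Z0" "i \<in> V"
  shows "(\<Sum>I\<in>Z0. \<Sum>J\<in>Z0. zvec LL NN S I * y (insert i (I \<union> J)) * zvec LL NN S J) = ww S i"
  using qf_mob[OF finLL, of S NN "\<lambda>K. y (insert i K)"] assms van_yi by (auto simp: Zs_def)

lemma Q_ks:
  assumes "S \<in> Z0"
  shows "(\<Sum>I\<in>Z0. \<Sum>J\<in>Z0. zvec LL NN S I * knap_shift V c C y (I \<union> J) * zvec LL NN S J)
     = Mob LL NN S (knap_shift V c C y)"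
  by (rule qf_mob[OF finLL]) (use assms van_ks in \<open>auto simp: Zs_def\<close>)

lemma p_nonneg:
  assumes "S \<in> Z0"
  shows "0 \<le> pp S"
proof -
  have "0 \<le> (\<Sum>I\<in>Pt t V. \<Sum>J\<in>Pt t V. zvec LL NN S I * y (I \<union> J) * zvec LL NN S J)"
    by (rule psd1[unfolded moment_psd_def, rule_format])
  also have "\<dots> = (\<Sum>I\<in>Z0. \<Sum>J\<in>Z0. zvec LL NN S I * y (I \<union> J) * zvec LL NN S J)"
    by (rule restrict_qf[OF finPt Z0_Pt(1)]) (rule zvec_supp)
  finally show ?thesis using Q_y[OF assms] by simp
qed

lemma cap:
  assumes "S \<in> Z0"
  shows "(\<Sum>j\<in>V. c j * ww S j) \<le> C * pp S"
proof -
  have "0 \<le> (\<Sum>I\<in>Pt (t-1) V. \<Sum>J\<in>Pt (t-1) V. zvec LL NN S I * knap_shift V c C y (I \<union> J) * zvec LL NN S J)"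
    by (rule psd2[unfolded moment_psd_def, rule_format])
  also have "\<dots> = (\<Sum>I\<in>Z0. \<Sum>J\<in>Z0. zvec LL NN S I * knap_shift V c C y (I \<union> J) * zvec LL NN S J)"
    by (rule restrict_qf[OF finPt Z0_Pt(2)]) (rule zvec_supp)
  also have "\<dots> = Mob LL NN S (knap_shift V c C y)" by (rule Q_ks[OF assms])
  also have "\<dots> = (\<Sum>K\<in>Zs LL NN S. C * ((-1)^card (K-S) * y K)
      - (\<Sum>j\<in>V. c j * ((-1)^card (K-S) * y (insert j K))))"
    unfolding Mob_def knap_shift_def
    by (rule sum.cong) (simp_all add: right_diff_distrib sum_distrib_left mult_ac)
  also have "\<dots> = C * pp S - (\<Sum>K\<in>Zs LL NN S. \<Sum>j\<in>V. c j * ((-1)^card (K-S) * y (insert j K)))"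
    by (simp add: sum_subtractf sum_distrib_left Mob_def)
  also have "(\<Sum>K\<in>Zs LL NN S. \<Sum>j\<in>V. c j * ((-1)^card (K-S) * y (insert j K)))
     = (\<Sum>j\<in>V. \<Sum>K\<in>Zs LL NN S. c j * ((-1)^card (K-S) * y (insert j K)))"
    by (rule sum.swap)
  also have "\<dots> = (\<Sum>j\<in>V. c j * ww S j)"
    by (simp add: Mob_def sum_distrib_left)
  finally show ?thesis by simp
qed

lemma w_in:
  assumes "i \<in> S"
  shows "ww S i = pp S"
  unfolding Mob_def
proof (rule sum.cong[OF refl])
  fix K assume "K \<in> Zs LL NN S"
  then have "i \<in> K" using assms by (auto simp: Zs_def)
  then show "(-1::real)^card (K - S) * y (insert i K) = (-1::real)^card (K - S) * y K"
    by (simp add: insert_absorb)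
qed

lemma w_out:
  assumes "S \<in> Z0" "i \<in> LL" "i \<notin> S"
  shows "ww S i = 0"
proof -
  have "ww S i = (\<Sum>J\<in>Zs LL NN S. (-1::real)^card (J - S) * y (insert i S \<union> J))"
    unfolding Mob_def
  proof (rule sum.cong[OF refl])
    fix J assume "J \<in> Zs LL NN S"
    then have "S \<subseteq> J" by (simp add: Zs_def)
    then have "insert i S \<union> J = insert i J" by blast
    then show "(-1::real)^card (J - S) * y (insert i J) = (-1::real)^card (J - S) * y (insert i S \<union> J)"
      by simp
  qed
  also have "\<dots> = 0"
  proof (rule inv_zero[OF finLL])
    show "S \<subseteq> insert i S" "insert i S \<subseteq> LL" "i \<in> insert i S" "i \<notin> S" using assms by (auto simp: Zs_def)
    have "S \<subseteq> LL" using assms by (simp add: Zs_def)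
    then have "finite S" by (rule finite_subset[OF _ finLL])
    then have "card (insert i S) \<le> NN + 1" using assms by (auto simp: Zs_def)
    then show "y K = 0" if "K \<subseteq> LL" "NN < card K" "card K \<le> card (insert i S) + NN" for K
      using that by (intro van_y) auto
  qed
  finally show ?thesis .
qed

end

lemma knap_opt_ge:
  assumes "finite V" "X \<subseteq> V" "(\<Sum>i\<in>X. c i) \<le> C"
  shows "(\<Sum>i\<in>X. v i) \<le> knapsack_OPT V c v C"
proof -
  have "finite {X. X \<subseteq> V \<and> (\<Sum>i\<in>X. c i) \<le> C}"
    by (rule finite_subset[of _ "Pow V"]) (use assms in auto)
  then have "finite {(\<Sum>i\<in>X. v i) | X. X \<subseteq> V \<and> (\<Sum>i\<in>X. c i) \<le> C}"
    by (rule finite_image_set)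
  then show ?thesis unfolding knapsack_OPT_def by (rule Max_ge) (use assms in blast)
qed

lemma sum_upd2:
  fixes g x :: "'a \<Rightarrow> real"
  assumes "finite V" "i \<in> V" "j \<in> V" "i \<noteq> j"
  shows "(\<Sum>k\<in>V. g k * (x(i:=a, j:=b)) k) = (\<Sum>k\<in>V. g k * x k) + g i * (a - x i) + g j * (b - x j)"
proof -
  have "(\<Sum>k\<in>V. g k * (x(i:=a, j:=b)) k) = (\<Sum>k\<in>V. g k * x k + (if k = i then g i * (a - x i) else 0)
      + (if k = j then g j * (b - x j) else 0))"
    by (rule sum.cong) (use assms in \<open>auto simp: algebra_simps\<close>)
  also have "\<dots> = (\<Sum>k\<in>V. g k * x k) + g i * (a - x i) + g j * (b - x j)"
    using assms by (simp add: sum.distrib)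
  finally show ?thesis .
qed

lemma sum_upd1:
  fixes g x :: "'a \<Rightarrow> real"
  assumes "finite V" "i \<in> V"
  shows "(\<Sum>k\<in>V. g k * (x(i:=a)) k) = (\<Sum>k\<in>V. g k * x k) + g i * (a - x i)"
proof -
  have "(\<Sum>k\<in>V. g k * (x(i:=a)) k) = (\<Sum>k\<in>V. g k * x k + (if k = i then g i * (a - x i) else 0))"
    by (rule sum.cong) (use assms in \<open>auto simp: algebra_simps\<close>)
  also have "\<dots> = (\<Sum>k\<in>V. g k * x k) + g i * (a - x i)"
    using assms by (simp add: sum.distrib)
  finally show ?thesis .
qed

definition fracs :: "'a set \<Rightarrow> ('a \<Rightarrow> real) \<Rightarrow> 'a set" where
  "fracs V x = {k \<in> V. 0 < x k \<and> x k < 1}"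

definition lpfeas :: "'a set \<Rightarrow> ('a \<Rightarrow> real) \<Rightarrow> real \<Rightarrow> ('a \<Rightarrow> real) \<Rightarrow> bool" where
  "lpfeas V c C x \<longleftrightarrow> (\<forall>k\<in>V. 0 \<le> x k \<and> x k \<le> 1) \<and> (\<Sum>k\<in>V. c k * x k) \<le> C"

lemma exch:
  assumes fin: "finite V" and c0: "\<forall>k\<in>V. 0 \<le> c k" and v0: "\<forall>k\<in>V. 0 \<le> v k"
    and feas: "lpfeas V c C x"
    and ij: "i \<in> fracs V x" "j \<in> fracs V x" "i \<noteq> j"
    and ord: "v j * c i \<le> v i * c j"
  shows "\<exists>x'. lpfeas V c C x' \<and> (\<Sum>k\<in>V. v k * x k) \<le> (\<Sum>k\<in>V. v k * x' k) \<and> fracs V x' \<subset> fracs V x"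
proof -
  have iV: "i \<in> V" and jV: "j \<in> V" and xi: "0 < x i" "x i < 1" and xj: "0 < x j" "x j < 1"
    using ij by (auto simp: fracs_def)
  show ?thesis
  proof (cases "c i = 0")
    case True
    let ?x' = "x(i := 1)"
    have "lpfeas V c C ?x'" using feas True sum_upd1[OF fin iV, of c x 1] by (auto simp: lpfeas_def)
    moreover have "(\<Sum>k\<in>V. v k * x k) \<le> (\<Sum>k\<in>V. v k * ?x' k)"
      using sum_upd1[OF fin iV, of v x 1] v0 iV xi by simp
    moreover have "fracs V ?x' \<subset> fracs V x" using ij by (auto simp: fracs_def)
    ultimately show ?thesis by blast
  next
    case ci: False
    show ?thesis
    proof (cases "c j = 0")
      case True
      let ?x' = "x(j := 1)"
      have "lpfeas V c C ?x'" using feas True sum_upd1[OF fin jV, of c x 1] by (auto simp: lpfeas_def)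
      moreover have "(\<Sum>k\<in>V. v k * x k) \<le> (\<Sum>k\<in>V. v k * ?x' k)"
        using sum_upd1[OF fin jV, of v x 1] v0 jV xj by simp
      moreover have "fracs V ?x' \<subset> fracs V x" using ij by (auto simp: fracs_def)
      ultimately show ?thesis by blast
    next
      case cj: False
      have "0 \<le> c i" "0 \<le> c j" using c0 iV jV by blast+
      then have cip: "0 < c i" and cjp: "0 < c j" using ci cj by linarith+
      define d where "d = min ((1 - x i) * c i) (x j * c j)"
      have d0: "0 \<le> d" using xi xj cip cjp by (simp add: d_def)
      have d1: "d / c i \<le> 1 - x i" using cip by (simp add: d_def pos_divide_le_eq)
      have d2: "d / c j \<le> x j" using cjp by (simp add: d_def pos_divide_le_eq)
      let ?x' = "x(i := x i + d / c i, j := x j - d / c j)"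
      have cs: "(\<Sum>k\<in>V. c k * ?x' k) = (\<Sum>k\<in>V. c k * x k)"
        using sum_upd2[OF fin iV jV ij(3), of c x] cip cjp by simp
      have "lpfeas V c C ?x'"
        unfolding lpfeas_def
      proof
        show "\<forall>k\<in>V. 0 \<le> ?x' k \<and> ?x' k \<le> 1"
        proof
          fix k assume k: "k \<in> V"
          have "0 \<le> d / c i" "0 \<le> d / c j" using d0 cip cjp by simp_all
          then show "0 \<le> ?x' k \<and> ?x' k \<le> 1"
            using feas d1 d2 xi xj ij(3) k by (auto simp: lpfeas_def)
        qed
        show "(\<Sum>k\<in>V. c k * ?x' k) \<le> C" using cs feas by (simp add: lpfeas_def)
      qed
      moreover have "(\<Sum>k\<in>V. v k * x k) \<le> (\<Sum>k\<in>V. v k * ?x' k)"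
      proof -
        have e: "(\<Sum>k\<in>V. v k * ?x' k) = (\<Sum>k\<in>V. v k * x k) + d * (v i / c i - v j / c j)"
        proof -
          have "(\<Sum>k\<in>V. v k * ?x' k) = (\<Sum>k\<in>V. v k * x k) + v i * ((x i + d / c i) - x i)
             + v j * ((x j - d / c j) - x j)"
            by (rule sum_upd2[OF fin iV jV ij(3)])
          then show ?thesis by (simp add: algebra_simps)
        qed
        have "v j / c j \<le> v i / c i" using ord cip cjp by (simp add: divide_simps mult.commute)
        then show ?thesis using e d0 by simp
      qed
      moreover have "fracs V ?x' \<subset> fracs V x"
      proof -
        have "fracs V ?x' \<subseteq> fracs V x" using ij by (auto simp: fracs_def)
        moreover have "i \<notin> fracs V ?x' \<or> j \<notin> fracs V ?x'"
        proof (cases "(1 - x i) * c i \<le> x j * c j")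
          case True
          then have "d = (1 - x i) * c i" by (simp add: d_def)
          then have "?x' i = 1" using cip ij(3) by simp
          then show ?thesis by (simp add: fracs_def)
        next
          case False
          then have "d = x j * c j" by (simp add: d_def)
          then have "?x' j = 0" using cjp by simp
          then show ?thesis by (simp add: fracs_def)
        qed
        ultimately show ?thesis using ij by blast
      qed
      ultimately show ?thesis by blast
    qed
  qed
qed

lemma lp_bound:
  assumes fin: "finite V" and c0: "\<forall>i\<in>V. 0 \<le> c i" and v0: "\<forall>i\<in>V. 0 \<le> v i"
    and feas: "lpfeas V c C x"
    and fr: "\<forall>i\<in>fracs V x. v i \<le> m" and m0: "0 \<le> m"
  shows "(\<Sum>i\<in>V. v i * x i) \<le> knapsack_OPT V c v C + m"
  using feas fr
proof (induction "card (fracs V x)" arbitrary: x rule: less_induct)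
  case less
  have finF: "finite (fracs V x)" using fin by (simp add: fracs_def)
  show ?case
  proof (cases "card (fracs V x) \<le> 1")
    case True
    let ?X = "{k \<in> V. x k = 1}"
    have x01: "\<forall>k\<in>V. 0 \<le> x k \<and> x k \<le> 1" "(\<Sum>k\<in>V. c k * x k) \<le> C"
      using less.prems by (auto simp: lpfeas_def)
    have XV: "?X \<subseteq> V" by auto
    have "(\<Sum>k\<in>?X. c k) = (\<Sum>k\<in>?X. c k * x k)" by simp
    also have "\<dots> \<le> (\<Sum>k\<in>V. c k * x k)"
      by (rule sum_mono2[OF fin XV]) (use c0 x01 in auto)
    finally have cX: "(\<Sum>k\<in>?X. c k) \<le> C" using x01 by simp
    have vX: "(\<Sum>k\<in>?X. v k) \<le> knapsack_OPT V c v C" by (rule knap_opt_ge[OF fin XV cX])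
    have split: "(\<Sum>k\<in>V. v k * x k) = (\<Sum>k\<in>V - ?X. v k * x k) + (\<Sum>k\<in>?X. v k * x k)"
      by (rule sum.subset_diff[OF XV fin])
    have "(\<Sum>k\<in>V - ?X. v k * x k) = (\<Sum>k\<in>fracs V x. v k * x k)"
      by (rule sum.mono_neutral_right) (use fin x01 in \<open>auto simp: fracs_def order_le_less\<close>)
    also have "\<dots> \<le> m"
    proof -
      have "\<forall>a\<in>fracs V x. \<forall>b\<in>fracs V x. a = b" using True finF card_le_Suc0_iff_eq by auto
      then consider "fracs V x = {}" | k where "fracs V x = {k}" by blast
      then show ?thesis
      proof cases
        case 1 then show ?thesis using m0 by simp
      next
        case 2
        then have "k \<in> V" "x k \<le> 1" "0 \<le> v k" "v k \<le> m" using less.prems v0 x01 by (auto simp: fracs_def)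
        then have "v k * x k \<le> m" by (smt (verit) mult_left_le)
        then show ?thesis using 2 by simp
      qed
    qed
    finally show ?thesis using split vX by simp
  next
    case False
    then obtain i j where ij: "i \<in> fracs V x" "j \<in> fracs V x" "i \<noteq> j"
      by (metis One_nat_def card_le_Suc0_iff_eq finF)
    have "\<exists>x'. lpfeas V c C x' \<and> (\<Sum>k\<in>V. v k * x k) \<le> (\<Sum>k\<in>V. v k * x' k) \<and> fracs V x' \<subset> fracs V x"
    proof (cases "v j * c i \<le> v i * c j")
      case True then show ?thesis using exch[OF fin c0 v0 less.prems(1) ij] by blast
    next
      case False then show ?thesis using exch[OF fin c0 v0 less.prems(1) ij(2,1) ij(3)[symmetric]] by simp
    qed
    then obtain x' where x': "lpfeas V c C x'" "(\<Sum>k\<in>V. v k * x k) \<le> (\<Sum>k\<in>V. v k * x' k)" "fracs V x' \<subset> fracs V x"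
      by blast
    have "card (fracs V x') < card (fracs V x)" using x'(3) finF by (rule psubset_card_mono[rotated])
    moreover have "\<forall>i\<in>fracs V x'. v i \<le> m" using x'(3) less.prems(2) by blast
    ultimately have "(\<Sum>k\<in>V. v k * x' k) \<le> knapsack_OPT V c v C + m" using less.hyps x'(1) by blast
    then show ?thesis using x'(2) by simp
  qed
qed

context lk
begin

lemma quad:
  assumes S: "S \<in> Z0" and i: "i \<in> V" "i \<notin> LL"
  shows "0 \<le> a*a*pp S + 2*a*b*ww S i + b*b*ww S i"
proof -
  let ?z = "zvec LL NN S"
  let ?Zi = "insert i ` Z0"
  define z' where "z' I = (if I \<in> Z0 then a * ?z I else if I \<in> ?Zi then b * ?z (I - {i}) else 0)" for I
  have notin: "i \<notin> K" if "K \<in> Z0" for K using that i by (auto simp: Zs_def)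
  have disj: "Z0 \<inter> ?Zi = {}" using i by (auto simp: Zs_def)
  have inj: "inj_on (insert i) Z0"
    by (rule inj_onI) (metis Diff_insert_absorb notin)
  have finZ: "finite Z0" by (rule finite_Zs[OF finLL])
  have sub: "Z0 \<union> ?Zi \<subseteq> Pt t V"
  proof
    fix I assume "I \<in> Z0 \<union> ?Zi"
    then show "I \<in> Pt t V"
    proof
      assume "I \<in> Z0" then show ?thesis using Z0_Pt by blast
    next
      assume "I \<in> ?Zi"
      then obtain K where K: "K \<in> Z0" "I = insert i K" by blast
      have "K \<subseteq> LL" using K by (simp add: Zs_def)
      then have "finite K" by (rule finite_subset[OF _ finLL])
      then have "card I \<le> card K + 1" using K by (simp add: card_insert_if)
      moreover have "card K \<le> t - 2" using K by (simp add: Zs_def)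
      moreover have "K \<subseteq> V" using K LL_V by (auto simp: Zs_def)
      ultimately show ?thesis using K i t2 by (auto simp: Pt_def)
    qed
  qed
  have z'1: "z' K = a * ?z K" if "K \<in> Z0" for K using that by (simp add: z'_def)
  have z'2: "z' (insert i K) = b * ?z K" if "K \<in> Z0" for K
  proof -
    have "insert i K \<notin> Z0" using i by (auto simp: Zs_def)
    moreover have "insert i K - {i} = K" using notin[OF that] by auto
    ultimately show ?thesis using that by (simp add: z'_def)
  qed
  have split: "(\<Sum>I\<in>Z0 \<union> ?Zi. F I) = (\<Sum>I\<in>Z0. F I) + (\<Sum>K\<in>Z0. F (insert i K))" for F :: "'a set \<Rightarrow> real"
  proof -
    have "(\<Sum>I\<in>Z0 \<union> ?Zi. F I) = (\<Sum>I\<in>Z0. F I) + (\<Sum>I\<in>?Zi. F I)"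
      by (rule sum.union_disjoint) (use finZ disj in auto)
    also have "(\<Sum>I\<in>?Zi. F I) = (\<Sum>K\<in>Z0. F (insert i K))"
      by (rule sum.reindex[OF inj, unfolded comp_def])
    finally show ?thesis .
  qed
  let ?G = "\<lambda>I J. z' I * y (I \<union> J) * z' J"
  have "0 \<le> (\<Sum>I\<in>Pt t V. \<Sum>J\<in>Pt t V. ?G I J)"
    by (rule psd1[unfolded moment_psd_def, rule_format])
  also have "\<dots> = (\<Sum>I\<in>Z0 \<union> ?Zi. \<Sum>J\<in>Z0 \<union> ?Zi. ?G I J)"
    by (rule restrict_qf[OF finPt sub]) (simp add: z'_def)
  also have "\<dots> = (\<Sum>I\<in>Z0. \<Sum>J\<in>Z0. ?G I J) + (\<Sum>I\<in>Z0. \<Sum>K\<in>Z0. ?G I (insert i K))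
      + ((\<Sum>K\<in>Z0. \<Sum>J\<in>Z0. ?G (insert i K) J) + (\<Sum>K\<in>Z0. \<Sum>K'\<in>Z0. ?G (insert i K) (insert i K')))"
    by (simp only: split sum.distrib)
  also have "(\<Sum>I\<in>Z0. \<Sum>J\<in>Z0. ?G I J) = (\<Sum>I\<in>Z0. \<Sum>J\<in>Z0. a*a*(?z I * y (I \<union> J) * ?z J))"
    by (intro sum.cong refl) (simp add: z'1 mult_ac)
  also have "(\<Sum>I\<in>Z0. \<Sum>K\<in>Z0. ?G I (insert i K)) = (\<Sum>I\<in>Z0. \<Sum>J\<in>Z0. a*b*(?z I * y (insert i (I \<union> J)) * ?z J))"
    by (intro sum.cong refl) (simp add: z'1 z'2 mult_ac)
  also have "(\<Sum>K\<in>Z0. \<Sum>J\<in>Z0. ?G (insert i K) J) = (\<Sum>I\<in>Z0. \<Sum>J\<in>Z0. a*b*(?z I * y (insert i (I \<union> J)) * ?z J))"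
    by (intro sum.cong refl) (simp add: z'1 z'2 mult_ac)
  also have "(\<Sum>K\<in>Z0. \<Sum>K'\<in>Z0. ?G (insert i K) (insert i K')) = (\<Sum>I\<in>Z0. \<Sum>J\<in>Z0. b*b*(?z I * y (insert i (I \<union> J)) * ?z J))"
    by (intro sum.cong refl) (simp add: z'2 mult_ac)
  finally have "0 \<le> a*a*(\<Sum>I\<in>Z0. \<Sum>J\<in>Z0. ?z I * y (I \<union> J) * ?z J)
      + 2*a*b*(\<Sum>I\<in>Z0. \<Sum>J\<in>Z0. ?z I * y (insert i (I \<union> J)) * ?z J)
      + b*b*(\<Sum>I\<in>Z0. \<Sum>J\<in>Z0. ?z I * y (insert i (I \<union> J)) * ?z J)"
    by (simp add: sum_distrib_left algebra_simps)
  then show ?thesis using Q_y[OF S] Q_yi[OF S i(1)] by simp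
qed

lemma w_bounds:
  assumes "S \<in> Z0" "i \<in> V" "i \<notin> LL"
  shows "0 \<le> ww S i" "ww S i \<le> pp S"
  using quad[OF assms, of 0 1] quad[OF assms, of 1 "-1"] by simp_all

lemma ww_props:
  assumes S: "S \<in> Z0" and i: "i \<in> V"
  shows "0 \<le> ww S i" "ww S i \<le> pp S" "i \<in> LL \<Longrightarrow> ww S i = 0 \<or> ww S i = pp S"
proof -
  have SL: "S \<subseteq> LL" using S by (simp add: Zs_def)
  show "0 \<le> ww S i"
  proof (cases "i \<in> LL")
    case True then show ?thesis
      using w_in[of i S] w_out[OF S True] p_nonneg[OF S] by (cases "i \<in> S") auto
  next
    case False then show ?thesis using w_bounds[OF S i False] by simp
  qed
  show "ww S i \<le> pp S"
  proof (cases "i \<in> LL")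
    case True then show ?thesis
      using w_in[of i S] w_out[OF S True] p_nonneg[OF S] by (cases "i \<in> S") auto
  next
    case False then show ?thesis using w_bounds[OF S i False] by simp
  qed
  show "ww S i = 0 \<or> ww S i = pp S" if "i \<in> LL"
    using w_in[of i S] w_out[OF S that] by (cases "i \<in> S") auto
qed

lemma per_S:
  assumes S: "S \<in> Z0"
  shows "(\<Sum>i\<in>V. v i * ww S i) \<le> (OPT + OPT / real (t-1)) * pp S"
proof (cases "pp S = 0")
  case True
  have "\<forall>i\<in>V. ww S i = 0"
  proof
    fix i assume iV: "i \<in> V"
    show "ww S i = 0" using ww_props(1,2)[OF S iV] True by linarith
  qed
  then show ?thesis using True by simp
next
  case False
  then have pp: "0 < pp S" using p_nonneg[OF S] by simp
  define x where "x i = ww S i / pp S" for i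
  have feas: "lpfeas V c C x"
    unfolding lpfeas_def
  proof
    show "\<forall>k\<in>V. 0 \<le> x k \<and> x k \<le> 1"
      using ww_props[OF S] pp by (simp add: x_def divide_simps)
    have "(\<Sum>k\<in>V. c k * x k) = (\<Sum>k\<in>V. c k * ww S k) / pp S"
      by (simp add: x_def sum_divide_distrib)
    also have "\<dots> \<le> C" using cap[OF S] pp by (simp add: divide_simps)
    finally show "(\<Sum>k\<in>V. c k * x k) \<le> C" .
  qed
  have t1: "0 < real (t - 1)" using t2 by simp
  have fr: "\<forall>i\<in>fracs V x. v i \<le> OPT / real (t-1)"
  proof
    fix i assume "i \<in> fracs V x"
    then have iV: "i \<in> V" and xi: "0 < x i" "x i < 1" by (auto simp: fracs_def)
    have "i \<notin> LL"
    proof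
      assume "i \<in> LL"
      then have "ww S i = 0 \<or> ww S i = pp S" using ww_props[OF S iV] by blast
      then show False using xi pp by (auto simp: x_def)
    qed
    then have "v i * real (t - 1) \<le> OPT" using iV by (simp add: LL_iff)
    then show "v i \<le> OPT / real (t-1)" using t1 by (simp add: pos_le_divide_eq)
  qed
  have m0: "0 \<le> OPT / real (t-1)" using opt_nonneg t1 by simp
  have "(\<Sum>i\<in>V. v i * x i) \<le> OPT + OPT / real (t-1)"
    using lp_bound[OF fin _ _ feas fr m0] c0 v0 by blast
  moreover have "(\<Sum>i\<in>V. v i * ww S i) = (\<Sum>i\<in>V. v i * x i) * pp S"
    using pp by (simp add: x_def sum_distrib_right)
  ultimately show ?thesis using pp by (simp add: mult_right_mono)
qed

lemma final_bound: "(\<Sum>i\<in>V. v i * y {i}) \<le> (1 + 1 / (real t - 1)) * OPT"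
proof -
  have finZ: "finite Z0" by (rule finite_Zs[OF finLL])
  have "(\<Sum>i\<in>V. v i * y {i}) = (\<Sum>i\<in>V. v i * (\<Sum>S\<in>Z0. ww S i))"
  proof (rule sum.cong[OF refl])
    fix i assume "i \<in> V"
    have "(\<Sum>S\<in>Z0. ww S i) = y (insert i {})" by (rule mob_sum[OF finLL])
    then show "v i * y {i} = v i * (\<Sum>S\<in>Z0. ww S i)" by simp
  qed
  also have "\<dots> = (\<Sum>i\<in>V. \<Sum>S\<in>Z0. v i * ww S i)" by (simp add: sum_distrib_left)
  also have "\<dots> = (\<Sum>S\<in>Z0. \<Sum>i\<in>V. v i * ww S i)" by (rule sum.swap)
  also have "\<dots> \<le> (\<Sum>S\<in>Z0. (OPT + OPT / real (t-1)) * pp S)"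
    by (rule sum_mono) (rule per_S)
  also have "\<dots> = (OPT + OPT / real (t-1)) * (\<Sum>S\<in>Z0. pp S)" by (simp add: sum_distrib_left)
  also have "(\<Sum>S\<in>Z0. pp S) = 1" using mob_sum[OF finLL, of NN y] y0 by simp
  also have "real (t - 1) = real t - 1" using t2 by simp
  finally show ?thesis by (simp add: algebra_simps)
qed

end

theorem mainTheorem10:
  fixes V :: "'a set" and c v :: "'a \<Rightarrow> real" and C :: real and t :: nat
    and y :: "'a set \<Rightarrow> real"
  assumes "finite V"
    and "\<And>i. i \<in> V \<Longrightarrow> 0 \<le> c i"
    and "\<And>i. i \<in> V \<Longrightarrow> 0 \<le> v i"
    and "\<And>i. i \<in> V \<Longrightarrow> c i \<le> C"
    and "t \<ge> 2"
    and "y \<in> lasserre_knapsack t V c C"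
  shows "(\<Sum>i\<in>V. v i * y {i}) \<le> (1 + 1 / (real t - 1)) * knapsack_OPT V c v C"
proof -
  interpret lk V c v C t y
    by (unfold_locales) (use assms in auto)
  show ?thesis by (rule final_bound)
qed

end
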